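(* Consider an ROS system with $n$ bidders in the smooth limit, and let $\phi$ be the flow of the differential equation $\frac{dm_i}{dt}=U_i(m)$, $i=1,\dots,n$. Then the set $[1,\infty)^n\subset\mathbb R^n$ is positively invariant with respect to $\phi$, i.e. $\phi(t,[1,\infty)^n)\subseteq[1,\infty)^n$ for all $t\ge 0$.
   Context: ROS system: $n$ bidders, $k$ items; bidder $i$ uses multiplier $m_i$ and bids $b_{ij}=m_iv_{ij}$ on item $j$. Each item is sold by a second-price auction with uniform random tie-breaking: the highest bid wins (ties split uniformly), allocation $x_{ij}\in[0,1]$ is the winning probability and payment $p_{ij}=x_{ij}\max_{s\ne i}b_{sj}$. Smooth limit: the valuation vector $v=(v_{ij})$ is random with a positive $C^1$ density on a box $[0,M]^{nk}$ and $U_i(m)=\mathbb E[\sum_j v_{ij}x_{ij}(m)-p_{ij}(m)]$, which is a $C^1$ function of $m$. A set $S$ is positively invariant for a flow $\phi$ if $\phi(t,S)\subseteq S$ for all $t\ge 0$. *)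

theory Defs
  imports "HOL-Analysis.Analysis"
begin

text \<open>Valuation profiles: v $ i $ j is the value of bidder i for item j.
  Bids: b $ i $ j = m $ i * v $ i $ j.\<close>

definition bids :: "real^'n \<Rightarrow> real^'k^'n \<Rightarrow> real^'k^'n" where
  "bids m v = (\<chi> i j. m $ i * v $ i $ j)"

text \<open>Winners of item j (highest bid), uniform random tie-breaking.\<close>
definition winners :: "real^'k^'n \<Rightarrow> 'k \<Rightarrow> 'n set" where
  "winners b j = {s. b $ s $ j = (MAX s'. b $ s' $ j)}"

definition alloc :: "real^'k^'n \<Rightarrow> 'n \<Rightarrow> 'k \<Rightarrow> real" where
  "alloc b i j = (if i \<in> winners b j then 1 / real (card (winners b j)) else 0)"

definition pay :: "real^'k^'n \<Rightarrow> 'n \<Rightarrow> 'k \<Rightarrow> real" where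
  "pay b i j = alloc b i j * Max {b $ s $ j | s. s \<noteq> i}"

definition val_box :: "real \<Rightarrow> (real^'k^'n) set" where
  "val_box M = cbox 0 (\<chi> i j. M)"

text \<open>Expected utility of bidder i in the smooth limit, v having density f
  supported on the box [0,M]^{nk}.\<close>
definition U :: "(real^'k^'n \<Rightarrow> real) \<Rightarrow> real \<Rightarrow> real^'n \<Rightarrow> 'n \<Rightarrow> real" where
  "U f M m i = integral (val_box M)
     (\<lambda>v. f v * (\<Sum>j\<in>UNIV. v $ i $ j * alloc (bids m v) i j - pay (bids m v) i j))"

definition Uvec :: "(real^'k^'n \<Rightarrow> real) \<Rightarrow> real \<Rightarrow> real^'n \<Rightarrow> real^'n" where
  "Uvec f M m = (\<chi> i. U f M m i)"

definition C1_on :: "'a::euclidean_space set \<Rightarrow> ('a \<Rightarrow> 'b::real_normed_vector) \<Rightarrow> bool" where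
  "C1_on S g \<longleftrightarrow> (\<exists>D. (\<forall>x\<in>S. (g has_derivative blinfun_apply (D x)) (at x within S))
                      \<and> continuous_on S D)"

end

theory Submission
  imports Defs
begin

lemma integrand_nonneg:
  fixes m :: "real^'n" and v :: "real^'k^'n"
  assumes n2: "CARD('n) \<ge> 2" and mi: "m $ i \<le> 1" and v: "\<And>j. v $ i $ j \<ge> 0"
  shows "v $ i $ j * alloc (bids m v) i j - pay (bids m v) i j \<ge> 0"
proof (cases "i \<in> winners (bids m v) j")
  case False
  then show ?thesis by (simp add: alloc_def pay_def)
next
  case True
  let ?b = "bids m v"
  have a0: "alloc ?b i j \<ge> 0" by (simp add: alloc_def)
  have bij: "?b $ i $ j = (MAX s'. ?b $ s' $ j)" using True by (simp add: winners_def)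
  obtain s where s: "s \<noteq> i"
  proof -
    have "UNIV - {i} \<noteq> {}"
    proof
      assume "UNIV - {i} = {}"
      then have "(UNIV :: 'n set) = {i}" by auto
      then have "CARD('n) = 1" by (metis card.empty card_insert_disjoint empty_iff finite.emptyI One_nat_def)
      then show False using n2 by simp
    qed
    then show ?thesis using that by auto
  qed
  have fin: "finite {?b $ s $ j | s. s \<noteq> i}" by simp
  have ne: "{?b $ s $ j | s. s \<noteq> i} \<noteq> {}" using s by auto
  have "Max {?b $ s $ j | s. s \<noteq> i} \<le> ?b $ i $ j"
    unfolding bij using fin ne by (auto intro!: Max_ge simp: Max_le_iff)
  also have "\<dots> = m $ i * v $ i $ j" by (simp add: bids_def)
  also have "\<dots> \<le> v $ i $ j" using mult_right_mono[OF mi v[of j]] by simp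
  finally have "Max {?b $ s $ j | s. s \<noteq> i} \<le> v $ i $ j" .
  then have "0 \<le> alloc ?b i j * (v $ i $ j - Max {?b $ s $ j | s. s \<noteq> i})"
    using a0 by simp
  then show ?thesis by (simp add: pay_def algebra_simps)
qed

lemma U_nonneg:
  fixes f :: "real^'k^'n \<Rightarrow> real" and m :: "real^'n"
  assumes n2: "CARD('n) \<ge> 2" and fpos: "\<forall>v\<in>val_box M. f v > 0" and mi: "m $ i \<le> 1"
  shows "U f M m i \<ge> 0"
proof -
  let ?g = "\<lambda>v. f v * (\<Sum>j\<in>UNIV. v $ i $ j * alloc (bids m v) i j - pay (bids m v) i j)"
  have pt: "?g v \<ge> 0" if "v \<in> val_box M" for v
  proof -
    have "0 \<le> v" using that unfolding val_box_def cbox_interval by simp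
    then have "\<And>j. v $ i $ j \<ge> 0" by (simp add: less_eq_vec_def)
    then have "(\<Sum>j\<in>UNIV. v $ i $ j * alloc (bids m v) i j - pay (bids m v) i j) \<ge> 0"
      using integrand_nonneg[OF n2 mi] by (intro sum_nonneg) blast
    then show ?thesis using fpos that by (simp add: less_imp_le)
  qed
  show ?thesis
  proof (cases "?g integrable_on val_box M")
    case True
    then show ?thesis unfolding U_def using pt by (rule integral_nonneg)
  next
    case False
    then show ?thesis unfolding U_def by (simp add: not_integrable_integral)
  qed
qed

theorem lemma2:
  fixes f :: "real^'k^'n \<Rightarrow> real" and M :: real
    and \<phi> :: "real \<Rightarrow> real^'n" and T :: real
  assumes n2: "CARD('n) \<ge> 2"
    and M: "M > 0"
    and fpos: "\<forall>v\<in>val_box M. f v > 0"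
    and fC1: "C1_on (val_box M) f"
    and fint: "f integrable_on val_box M"
    and fnorm: "integral (val_box M) f = 1"
    and UC1: "C1_on {m :: real^'n. \<forall>i. m $ i > 0} (Uvec f M)"
    and T: "T \<ge> 0"
    and sol: "\<forall>t\<in>{0..T}. (\<phi> has_vector_derivative Uvec f M (\<phi> t)) (at t within {0..T})"
    and init: "\<phi> 0 \<in> {m. \<forall>i. m $ i \<ge> 1}"
  shows "\<forall>t\<in>{0..T}. \<phi> t \<in> {m. \<forall>i. m $ i \<ge> 1}"
proof (intro ballI CollectI allI)
  fix t i assume t: "t \<in> {0..T}"
  define g where "g = (\<lambda>\<tau>. \<phi> \<tau> $ i)"
  have gd: "(g has_vector_derivative U f M (\<phi> \<tau>) i) (at \<tau> within {0..T})" if "\<tau> \<in> {0..T}" for \<tau>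
    using bounded_linear.has_vector_derivative[OF bounded_linear_vec_nth sol[rule_format, OF that], of i]
    by (simp add: g_def Uvec_def)
  have gc: "continuous_on {0..T} g"
    using gd continuous_on_eq_continuous_within has_vector_derivative_continuous by blast
  have gct: "continuous_on {0..t} g" using gc t by (auto intro: continuous_on_subset)
  show "g t \<ge> 1" unfolding g_def[symmetric]
  proof (rule ccontr)
    assume gt: "\<not> g t \<ge> 1"
    define S where "S = {\<tau> \<in> {0..t}. 1 \<le> g \<tau>}"
    have clS: "closed S" unfolding S_def
      by (rule continuous_on_closed_Collect_le[OF continuous_on_const gct]) simp
    have 0: "0 \<in> S" using init t by (simp add: S_def g_def)
    have bdd: "bdd_above S" unfolding S_def by (rule bdd_aboveI[of _ t]) auto
    define s where "s = Sup S"
    have sS: "s \<in> S" unfolding s_def using clS 0 bdd closed_contains_Sup by blast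
    have st: "s < t" using sS gt by (auto simp: S_def less_le)
    have gs: "g s \<ge> 1" "0 \<le> s" using sS by (auto simp: S_def)
    have less: "g \<tau> < 1" if "s < \<tau>" "\<tau> \<le> t" for \<tau>
    proof (rule ccontr)
      assume "\<not> g \<tau> < 1"
      then have "\<tau> \<in> S" using that gs by (auto simp: S_def)
      then have "\<tau> \<le> s" unfolding s_def using bdd by (rule cSup_upper)
      then show False using that by simp
    qed
    have dz: "(g has_real_derivative U f M (\<phi> z) i) (at z)" if "s < z" "z < t" for z
    proof -
      have "0 < z" "z < T" using that gs t by auto
      then have "at z within {0..T} = at z" by (rule at_within_Icc_at)
      then show ?thesis using gd[of z] that gs t
        by (simp add: has_real_derivative_iff_has_vector_derivative)
    qed
    have "continuous_on {s..t} g" using gct gs by (auto intro: continuous_on_subset)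
    moreover have "\<forall>x. s < x \<and> x < t \<longrightarrow> g differentiable (at x)"
      using dz real_differentiable_def by blast
    ultimately obtain l z where z: "s < z" "z < t" "(g has_real_derivative l) (at z)"
        "g t - g s = (t - s) * l"
      using MVT[OF st] by blast
    have "l = U f M (\<phi> z) i" using z dz DERIV_unique by blast
    moreover have "U f M (\<phi> z) i \<ge> 0"
      using U_nonneg[OF n2 fpos] less[of z] z by (simp add: g_def)
    ultimately have "(t - s) * l \<ge> 0" using st by simp
    then have "g t \<ge> g s" using z(4) by linarith
    then show False using gs gt by simp
  qed
qed

end
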